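(* For $i=1,2$ let $\mathbf{L}_i=(L_i,\le)$ be a nontrivial finite join-semilattice with greatest element $1$ satisfying property $( * )$, and let $(R_i,\vee,\circ)$ be a subsemiring of $(\mathrm{JM}_1(\mathbf{L}_i),\vee,\circ)$ such that $f_{a,b}\in R_i$ for all $a\in L_i\setminus\{1\}$, $b\in L_i$, and every $f\in R_i$ satisfies $f_{a,b}\le f$ for some $a\in L_i\setminus\{1\}$, $b\in L_i$. If $(R_1,\vee,\circ)$ and $(R_2,\vee,\circ)$ are isomorphic semirings, then $\mathbf{L}_1$ and $\mathbf{L}_2$ are isomorphic.
   Context: $\mathrm{JM}_1(\mathbf{L})$ is the set of maps $f:L\to L$ preserving binary joins with $f(1)=1$, a semiring under pointwise join and composition, ordered pointwise. $f_{a,b}(x)=b$ if $x\le a$ and $1$ otherwise. A finite semilattice with greatest element $1$ satisfies $( * )$ if there exists $u$ with $1\ne u\vee x$ for all $x\ne 1$. *)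

theory Defs
  imports Main
begin

definition JM1 :: "('a::{semilattice_sup,order_top} \<Rightarrow> 'a) set" where
  "JM1 = {f. (\<forall>x y. f (sup x y) = sup (f x) (f y)) \<and> f top = top}"

definition fab :: "'a::{semilattice_sup,order_top} \<Rightarrow> 'a \<Rightarrow> 'a \<Rightarrow> 'a" where
  "fab a b = (\<lambda>x. if x \<le> a then b else top)"

definition star_prop :: "'a::{semilattice_sup,order_top} itself \<Rightarrow> bool" where
  "star_prop _ = (\<exists>u::'a. \<forall>x. x \<noteq> top \<longrightarrow> sup u x \<noteq> top)"

definition subsemiring_JM1 :: "('a::{semilattice_sup,order_top} \<Rightarrow> 'a) set \<Rightarrow> bool" where
  "subsemiring_JM1 R = (R \<subseteq> JM1 \<and> R \<noteq> {} \<and>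
     (\<forall>f\<in>R. \<forall>g\<in>R. (\<lambda>x. sup (f x) (g x)) \<in> R \<and> f \<circ> g \<in> R))"

definition semiring_iso :: "('a \<Rightarrow> 'a::semilattice_sup) set \<Rightarrow> ('b \<Rightarrow> 'b::semilattice_sup) set \<Rightarrow> bool" where
  "semiring_iso R1 R2 = (\<exists>\<phi>. bij_betw \<phi> R1 R2 \<and>
     (\<forall>f\<in>R1. \<forall>g\<in>R1. \<phi> (\<lambda>x. sup (f x) (g x)) = (\<lambda>y. sup (\<phi> f y) (\<phi> g y))
                    \<and> \<phi> (f \<circ> g) = \<phi> f \<circ> \<phi> g))"

end

theory Submission
  imports Defs
begin

lemma fab_sup: "fab c (sup d d') = (\<lambda>y. sup (fab c d y) (fab c d' y))"
  by (rule ext) (simp add: fab_def)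

lemma fab_inj: "inj (fab a)"
  by (rule injI) (metis fab_def order_refl)

lemma comp_fab: "f top = top \<Longrightarrow> f \<circ> fab a b = fab a (f b)"
  by (rule ext) (simp add: fab_def)

lemma JM1_top: "f \<in> JM1 \<Longrightarrow> f top = top"
  by (simp add: JM1_def)

lemma ideal_fab:
  fixes R :: "('a::{semilattice_sup,order_top} \<Rightarrow> 'a) set"
  assumes sub: "R \<subseteq> JM1" and fabR: "\<forall>a b. a \<noteq> top \<longrightarrow> fab a b \<in> R"
    and a: "a \<noteq> top" and b: "b \<noteq> top"
  shows "(\<lambda>f. f \<circ> fab a b) ` R = range (fab a)"
proof
  show "(\<lambda>f. f \<circ> fab a b) ` R \<subseteq> range (fab a)"
    using sub by (auto simp: comp_fab JM1_top)
next
  show "range (fab a) \<subseteq> (\<lambda>f. f \<circ> fab a b) ` R"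
  proof
    fix F assume "F \<in> range (fab a)"
    then obtain d where F: "F = fab a d" by auto
    have "fab b d \<in> R" using fabR b by auto
    moreover have "fab b d \<circ> fab a b = F"
      using b by (auto simp: F fab_def fun_eq_iff top_unique)
    ultimately show "F \<in> (\<lambda>f. f \<circ> fab a b) ` R" by (metis image_eqI)
  qed
qed

lemma ideal_embed:
  fixes R :: "('a::{semilattice_sup,order_top} \<Rightarrow> 'a) set"
  assumes fabR: "\<forall>a b. a \<noteq> top \<longrightarrow> fab a b \<in> R"
    and g: "g \<noteq> (\<lambda>x. top)"
  shows "\<exists>e::'a \<Rightarrow> 'a \<Rightarrow> 'a. inj e \<and> (\<forall>u v. e (sup u v) = (\<lambda>y. sup (e u y) (e v y)))
            \<and> range e \<subseteq> (\<lambda>f. f \<circ> g) ` R"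
proof -
  obtain x0 where x0: "g x0 \<noteq> top" using g by auto
  define e where "e = (\<lambda>d. fab (g x0) d \<circ> g)"
  have i1: "inj e"
  proof (rule injI)
    fix u v assume "e u = e v"
    hence "e u x0 = e v x0" by simp
    thus "u = v" by (simp add: e_def fab_def)
  qed
  have i2: "\<forall>u v. e (sup u v) = (\<lambda>y. sup (e u y) (e v y))"
    by (auto simp: e_def fab_def fun_eq_iff)
  have i3: "range e \<subseteq> (\<lambda>f. f \<circ> g) ` R"
  proof (rule image_subsetI)
    fix d
    have m: "fab (g x0) d \<in> R" using fabR x0 by blast
    show "e d \<in> (\<lambda>f. f \<circ> g) ` R" unfolding e_def by (rule image_eqI[OF _ m]) simp
  qed
  show ?thesis by (rule exI[of _ e], intro conjI, fact i1, fact i2, fact i3)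
qed

lemma ideal_top:
  fixes R :: "('a::{semilattice_sup,order_top} \<Rightarrow> 'a) set"
  assumes "R \<subseteq> JM1"
  shows "(\<lambda>f. f \<circ> (\<lambda>x. top)) ` R \<subseteq> {\<lambda>x. top}"
  using assms by (auto simp: JM1_top o_def)

lemma card_ge2:
  assumes "\<exists>x::'a::{order_top,finite}. x \<noteq> top"
  shows "2 \<le> card (UNIV::'a set)"
proof -
  obtain x::'a where "x \<noteq> top" using assms by auto
  hence "card {x, top} = 2" by simp
  moreover have "card {x, top} \<le> card (UNIV::'a set)" by (rule card_mono) auto
  ultimately show ?thesis by simp
qed

theorem proposition6p6:
  fixes R1 :: "('a::{semilattice_sup,order_top,finite} \<Rightarrow> 'a) set"
    and R2 :: "('b::{semilattice_sup,order_top,finite} \<Rightarrow> 'b) set"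
  assumes nontriv1: "\<exists>x::'a. x \<noteq> top"
    and nontriv2: "\<exists>x::'b. x \<noteq> top"
    and star1: "star_prop TYPE('a)"
    and star2: "star_prop TYPE('b)"
    and sub1: "subsemiring_JM1 R1"
    and sub2: "subsemiring_JM1 R2"
    and fab1: "\<forall>a b. a \<noteq> top \<longrightarrow> fab a b \<in> R1"
    and fab2: "\<forall>a b. a \<noteq> top \<longrightarrow> fab a b \<in> R2"
    and below1: "\<forall>f\<in>R1. \<exists>a b. a \<noteq> top \<and> fab a b \<le> f"
    and below2: "\<forall>f\<in>R2. \<exists>a b. a \<noteq> top \<and> fab a b \<le> f"
    and iso: "semiring_iso R1 R2"
  shows "\<exists>h::'a \<Rightarrow> 'b. bij h \<and> (\<forall>x y. h (sup x y) = sup (h x) (h y))"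
proof -
  obtain \<phi> where bij\<phi>: "bij_betw \<phi> R1 R2" and
    hom: "\<forall>f\<in>R1. \<forall>g\<in>R1. \<phi> (\<lambda>x. sup (f x) (g x)) = (\<lambda>y. sup (\<phi> f y) (\<phi> g y))
                    \<and> \<phi> (f \<circ> g) = \<phi> f \<circ> \<phi> g"
    using iso unfolding semiring_iso_def by blast
  have R1J: "R1 \<subseteq> JM1" and R2J: "R2 \<subseteq> JM1"
    and c1: "\<forall>f\<in>R1. \<forall>g\<in>R1. f \<circ> g \<in> R1" and c2: "\<forall>f\<in>R2. \<forall>g\<in>R2. f \<circ> g \<in> R2"
    using sub1 sub2 unfolding subsemiring_JM1_def by auto
  define I1 :: "('a \<Rightarrow> 'a) \<Rightarrow> ('a \<Rightarrow> 'a) set" where "I1 = (\<lambda>g. (\<lambda>f. f \<circ> g) ` R1)"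
  define I2 :: "('b \<Rightarrow> 'b) \<Rightarrow> ('b \<Rightarrow> 'b) set" where "I2 = (\<lambda>g. (\<lambda>f. f \<circ> g) ` R2)"
  have img: "\<phi> ` I1 g = I2 (\<phi> g)" if "g \<in> R1" for g
  proof -
    have "\<phi> ` I1 g = (\<lambda>f. \<phi> f \<circ> \<phi> g) ` R1"
      unfolding I1_def image_image using hom that by (auto intro!: image_cong)
    also have "\<dots> = (\<lambda>f. f \<circ> \<phi> g) ` (\<phi> ` R1)" by (simp add: image_image)
    also have "\<phi> ` R1 = R2" using bij\<phi> by (simp add: bij_betw_def)
    finally show ?thesis by (simp only: I2_def)
  qed
  have sub_I1: "I1 g \<subseteq> R1" if "g \<in> R1" for g using c1 that by (auto simp: I1_def)
  have cardI: "card (I1 g) = card (I2 (\<phi> g))" if "g \<in> R1" for g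
  proof -
    have "inj_on \<phi> (I1 g)" using bij\<phi> sub_I1[OF that]
      by (meson bij_betw_def inj_on_subset)
    thus ?thesis using card_image img[OF that] by metis
  qed
  have bij1: "bij_betw \<phi> (I1 g) (I2 (\<phi> g))" if "g \<in> R1" for g
    unfolding bij_betw_def using bij\<phi> sub_I1[OF that] img[OF that]
    by (meson bij_betw_def inj_on_subset)
  have ge2a: "2 \<le> card (UNIV::'a set)" by (rule card_ge2[OF nontriv1])
  have ge2b: "2 \<le> card (UNIV::'b set)" by (rule card_ge2[OF nontriv2])
  have fin1: "finite (I1 g)" for g by (rule finite)
  have fin2: "finite (I2 g)" for g by (rule finite)
  obtain x1 :: 'a where x1: "x1 \<noteq> top" using nontriv1 by auto
  define g1 where "g1 = fab x1 x1"
  have g1R: "g1 \<in> R1" using fab1 x1 by (simp add: g1_def)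
  have I1g1: "I1 g1 = range (fab x1)"
    unfolding I1_def g1_def by (rule ideal_fab[OF R1J fab1 x1 x1])
  have cI1g1: "card (I1 g1) = card (UNIV::'a set)"
    using I1g1 card_image[OF fab_inj[of x1]] by simp
  have pg1: "\<phi> g1 \<noteq> (\<lambda>x. top)"
  proof
    assume "\<phi> g1 = (\<lambda>x. top)"
    hence "I2 (\<phi> g1) \<subseteq> {\<lambda>x. top}" using ideal_top[OF R2J] unfolding I2_def by simp
    then have "card (I2 (\<phi> g1)) \<le> card {(\<lambda>x. top) :: 'b \<Rightarrow> 'b}" by (metis card_mono finite)
    hence "card (I2 (\<phi> g1)) \<le> 1" by simp
    thus False using cardI[OF g1R] cI1g1 ge2a by simp
  qed
  obtain e2 :: "'b \<Rightarrow> 'b \<Rightarrow> 'b" where e2inj: "inj e2"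
    and e2sup: "\<forall>u v. e2 (sup u v) = (\<lambda>y. sup (e2 u y) (e2 v y))"
    and e2r: "range e2 \<subseteq> I2 (\<phi> g1)"
    using ideal_embed[OF fab2 pg1] unfolding I2_def by blast
  have le_ba: "card (UNIV::'b set) \<le> card (UNIV::'a set)"
  proof -
    have "card (UNIV::'b set) = card (range e2)" using card_image[OF e2inj] by simp
    also have "\<dots> \<le> card (I2 (\<phi> g1))" using e2r by (rule card_mono[OF fin2])
    finally show ?thesis using cardI[OF g1R] cI1g1 by simp
  qed
  obtain x2 :: 'b where x2: "x2 \<noteq> top" using nontriv2 by auto
  define g2 where "g2 = fab x2 x2"
  have g2R: "g2 \<in> R2" using fab2 x2 by (simp add: g2_def)
  have I2g2: "I2 g2 = range (fab x2)"
    unfolding I2_def g2_def by (rule ideal_fab[OF R2J fab2 x2 x2])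
  have cI2g2: "card (I2 g2) = card (UNIV::'b set)"
    using I2g2 card_image[OF fab_inj[of x2]] by simp
  obtain g1' where g1'R: "g1' \<in> R1" and g1'e: "\<phi> g1' = g2"
    using bij\<phi> g2R by (metis bij_betw_def imageE)
  have pg1': "g1' \<noteq> (\<lambda>x. top)"
  proof
    assume "g1' = (\<lambda>x. top)"
    hence "I1 g1' \<subseteq> {\<lambda>x. top}" using ideal_top[OF R1J] unfolding I1_def by simp
    hence "card (I1 g1') \<le> card {(\<lambda>x. top) :: 'a \<Rightarrow> 'a}" by (metis card_mono finite)
    hence "card (I1 g1') \<le> 1" by simp
    thus False using cardI[OF g1'R] g1'e cI2g2 ge2b by simp
  qed
  obtain e1 :: "'a \<Rightarrow> 'a \<Rightarrow> 'a" where e1inj: "inj e1"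
    and e1r: "range e1 \<subseteq> I1 g1'"
    using ideal_embed[OF fab1 pg1'] unfolding I1_def by blast
  have le_ab: "card (UNIV::'a set) \<le> card (UNIV::'b set)"
  proof -
    have "card (UNIV::'a set) = card (range e1)" using card_image[OF e1inj] by simp
    also have "\<dots> \<le> card (I1 g1')" using e1r by (rule card_mono[OF fin1])
    finally show ?thesis using cardI[OF g1'R] g1'e cI2g2 by simp
  qed
  have e2bij: "bij_betw e2 UNIV (I2 (\<phi> g1))"
  proof -
    have "card (range e2) = card (I2 (\<phi> g1))"
      using card_image[OF e2inj] cardI[OF g1R] cI1g1 le_ab le_ba by simp
    hence "range e2 = I2 (\<phi> g1)" using e2r card_subset_eq[OF fin2] by blast
    thus ?thesis using e2inj by (simp add: bij_betw_def)
  qed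
  have fbij: "bij_betw (fab x1) UNIV (I1 g1)"
    using I1g1 fab_inj by (simp add: bij_betw_def)
  define h where "h = inv_into UNIV e2 \<circ> \<phi> \<circ> fab x1"
  have "bij_betw (inv_into UNIV e2 \<circ> (\<phi> \<circ> fab x1)) UNIV UNIV"
    by (rule bij_betw_trans[OF bij_betw_trans[OF fbij bij1[OF g1R]] bij_betw_inv_into[OF e2bij]])
  hence "bij_betw h UNIV UNIV" by (simp add: h_def comp_assoc)
  moreover have "h (sup x y) = sup (h x) (h y)" for x y
  proof -
    have fx: "fab x1 x \<in> R1" "fab x1 y \<in> R1" using fab1 x1 by auto
    have px: "\<phi> (fab x1 x) \<in> I2 (\<phi> g1)" "\<phi> (fab x1 y) \<in> I2 (\<phi> g1)"
      by (metis bij1[OF g1R] bij_betw_apply I1g1 rangeI)+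
    obtain u where u: "e2 u = \<phi> (fab x1 x)" using px(1) e2bij by (metis bij_betw_def imageE)
    obtain v where v: "e2 v = \<phi> (fab x1 y)" using px(2) e2bij by (metis bij_betw_def imageE)
    have "\<phi> (fab x1 (sup x y)) = (\<lambda>z. sup (\<phi> (fab x1 x) z) (\<phi> (fab x1 y) z))"
      using hom fx by (simp add: fab_sup)
    also have "\<dots> = e2 (sup u v)" using u v e2sup by simp
    finally have "h (sup x y) = sup u v" unfolding h_def using e2inj by simp
    moreover have "h x = u" "h y = v" unfolding h_def using u v e2inj
      by (simp_all add: inv_f_eq)
    ultimately show ?thesis by simp
  qed
  ultimately show ?thesis by blast
qed

end
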